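(* Let $\pi$ be a positive probability density on $\mathbb{R}^d$ with $\log\pi\in C^1(\mathbb{R}^d)$ and let $\mu_\sigma$ be a symmetric probability density on $\mathbb{R}^d$ ($\mu_\sigma(z)=\mu_\sigma(-z)$). Let $P^R$ be the Metropolis--Hastings kernel with target $\pi$ and candidate $y=x+z$, $z\sim\mu_\sigma$. Let $\check P^B$ be the Metropolis--Hastings kernel with target $\pi$ and candidate generated by drawing $z\sim\mu_\sigma$, setting $\check b=1$ with probability $\check p(x,z)=1/(1+e^{-z^T\nabla\log\pi(x)})$ and $\check b=-1$ otherwise, and proposing $y=x+\check b z$. Then $\mathrm{Gap}(P^R)\ge\mathrm{Gap}(\check P^B)/2$.
   Context: Metropolis--Hastings kernel with target $\pi$ and candidate density $q(x,y)$: propose $y\sim q(x,\cdot)$ and accept with probability $\min\{1,\pi(y)q(y,x)/(\pi(x)q(x,y))\}$, else stay. $\mathrm{Gap}(P)=\inf_{f\in L^2_{0,1}(\pi)}\frac12\int (f(y)-f(x))^2\pi(dx)P(x,dy)$ with $L^2_{0,1}(\pi)=\{f:\mathbb{E}_\pi f=0,\mathrm{Var}_\pi f=1\}$. *)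

theory Defs
  imports "HOL-Probability.Probability"
begin

definition prob_density :: "('a::euclidean_space \<Rightarrow> real) \<Rightarrow> bool" where
  "prob_density p \<longleftrightarrow> p \<in> borel_measurable borel \<and> (\<forall>x. 0 \<le> p x)
      \<and> (\<integral>\<^sup>+ x. ennreal (p x) \<partial>lborel) = 1"

definition mh_accept :: "('a \<Rightarrow> real) \<Rightarrow> ('a \<Rightarrow> 'a \<Rightarrow> real) \<Rightarrow> 'a \<Rightarrow> 'a \<Rightarrow> real" where
  "mh_accept tgt q x y = min 1 ((tgt y * q y x) / (tgt x * q x y))"

definition mh_kernel :: "('a::euclidean_space \<Rightarrow> real) \<Rightarrow> ('a \<Rightarrow> 'a \<Rightarrow> real) \<Rightarrow> 'a \<Rightarrow> 'a measure" where
  "mh_kernel tgt q x =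
     bind (density lborel (\<lambda>y. ennreal (q x y)))
       (\<lambda>y. bind (measure_pmf (bernoulli_pmf (mh_accept tgt q x y)))
               (\<lambda>b. return borel (if b then y else x)))"

definition L2_01 :: "('a::euclidean_space \<Rightarrow> real) \<Rightarrow> ('a \<Rightarrow> real) set" where
  "L2_01 tgt = {f. f \<in> borel_measurable borel
      \<and> integrable (density lborel tgt) (\<lambda>x. (f x)\<^sup>2)
      \<and> (\<integral>x. f x \<partial>density lborel tgt) = 0
      \<and> (\<integral>x. (f x - (\<integral>u. f u \<partial>density lborel tgt))\<^sup>2 \<partial>density lborel tgt) = 1}"

definition dirichlet_form :: "('a::euclidean_space \<Rightarrow> real) \<Rightarrow> ('a \<Rightarrow> 'a measure) \<Rightarrow> ('a \<Rightarrow> real) \<Rightarrow> ennreal" where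
  "dirichlet_form tgt P f =
     (\<integral>\<^sup>+ x. (\<integral>\<^sup>+ y. ennreal ((f y - f x)\<^sup>2 / 2) \<partial>P x) \<partial>density lborel tgt)"

definition spectral_gap :: "('a::euclidean_space \<Rightarrow> real) \<Rightarrow> ('a \<Rightarrow> 'a measure) \<Rightarrow> ennreal" where
  "spectral_gap tgt P = (INF f \<in> L2_01 tgt. dirichlet_form tgt P f)"

definition rw_proposal :: "('a::euclidean_space \<Rightarrow> real) \<Rightarrow> 'a \<Rightarrow> 'a \<Rightarrow> real" where
  "rw_proposal mu x y = mu (y - x)"

definition pcheck :: "('a::euclidean_space \<Rightarrow> 'a) \<Rightarrow> 'a \<Rightarrow> 'a \<Rightarrow> real" where
  "pcheck g x z = 1 / (1 + exp (- (z \<bullet> g x)))"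

text \<open>Density of the candidate y = x + b z with z ~ mu, b = 1 w.p. pcheck(x,z), b = -1
  otherwise: the b=1 branch contributes mu(y-x) pcheck(x,y-x), the b=-1 branch
  contributes mu(x-y)(1 - pcheck(x,x-y)).\<close>
definition barker_proposal :: "('a::euclidean_space \<Rightarrow> real) \<Rightarrow> ('a \<Rightarrow> 'a) \<Rightarrow> 'a \<Rightarrow> 'a \<Rightarrow> real" where
  "barker_proposal mu g x y =
     mu (y - x) * pcheck g x (y - x) + mu (x - y) * (1 - pcheck g x (x - y))"

end

theory Submission
  imports Defs
begin

lemma K_int:
  fixes x y :: "'a::euclidean_space"
  assumes p: "0 \<le> p" "p \<le> 1" and h: "h \<in> borel_measurable borel"
  shows "(\<integral>\<^sup>+z. h z \<partial>(measure_pmf (bernoulli_pmf p) \<bind> (\<lambda>b. return borel (if b then y else x))))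
         = h y * ennreal p + h x * ennreal (1 - p)"
proof -
  have N: "(\<lambda>b. return borel (if b then y else x)) \<in> measurable (measure_pmf (bernoulli_pmf p)) (subprob_algebra borel)"
    by (simp add: space_subprob_algebra subprob_space_return)
  show ?thesis
    apply (subst nn_integral_bind[OF h N])
    apply (subst nn_integral_return)
    using p by (auto simp: nn_integral_return h)
qed

lemma K_meas:
  fixes x :: "'a::euclidean_space"
  assumes a: "a \<in> borel_measurable borel" "\<And>y. 0 \<le> a y" "\<And>y. a y \<le> 1"
  shows "(\<lambda>y. measure_pmf (bernoulli_pmf (a y)) \<bind> (\<lambda>b. return borel (if b then y else x)))
     \<in> measurable borel (subprob_algebra borel)"
proof (rule measurable_subprob_algebra)
  fix y :: 'a
  have N: "(\<lambda>b. return borel (if b then y else x)) \<in> measurable (measure_pmf (bernoulli_pmf (a y))) (subprob_algebra borel)"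
    by (simp add: space_subprob_algebra subprob_space_return)
  show "subprob_space (measure_pmf (bernoulli_pmf (a y)) \<bind> (\<lambda>b. return borel (if b then y else x)))"
    by (rule subprob_space_bind[OF _ N]) (simp add: prob_space_imp_subprob_space measure_pmf.prob_space_axioms)
  show "sets (measure_pmf (bernoulli_pmf (a y)) \<bind> (\<lambda>b. return borel (if b then y else x))) = sets borel"
    by (rule sets_bind) auto
next
  fix A :: "'a set" assume A: "A \<in> sets borel"
  have "emeasure (measure_pmf (bernoulli_pmf (a y)) \<bind> (\<lambda>b. return borel (if b then y else x))) A
      = indicator A y * ennreal (a y) + indicator A x * ennreal (1 - a y)" for y
  proof -
    have s: "sets (measure_pmf (bernoulli_pmf (a y)) \<bind> (\<lambda>b. return borel (if b then y else x))) = sets borel"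
      by (rule sets_bind) auto
    show ?thesis
      apply (subst nn_integral_indicator[symmetric])
      using A s apply simp
      apply (rule K_int)
      using a A by auto
  qed
  then show "(\<lambda>y. emeasure (measure_pmf (bernoulli_pmf (a y)) \<bind> (\<lambda>b. return borel (if b then y else x))) A) \<in> borel_measurable borel"
    using a A by simp
qed


lemma accept_bounds:
  assumes "\<And>x. tgt x > 0" "\<And>x y. q x y \<ge> 0"
  shows "0 \<le> mh_accept tgt q x y" "mh_accept tgt q x y \<le> 1"
  using assms[of x] assms[of y] assms(2)[of x y] assms(2)[of y x]
  by (auto simp: mh_accept_def)

lemma kernel_int:
  fixes tgt :: "'a::euclidean_space \<Rightarrow> real"
  assumes tm[measurable]: "tgt \<in> borel_measurable borel" and tp: "\<And>x. tgt x > 0"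
    and qn: "\<And>x y. q x y \<ge> 0"
    and q1[measurable]: "(\<lambda>y. q x y) \<in> borel_measurable borel"
    and q2[measurable]: "(\<lambda>y. q y x) \<in> borel_measurable borel"
    and fm[measurable]: "f \<in> borel_measurable borel"
  shows "(\<integral>\<^sup>+y. ennreal ((f y - f x)\<^sup>2/2) \<partial>mh_kernel tgt q x)
       = (\<integral>\<^sup>+y. ennreal (q x y * mh_accept tgt q x y * ((f y - f x)\<^sup>2/2)) \<partial>lborel)"
proof -
  define a where "a = (\<lambda>y. mh_accept tgt q x y)"
  have am[measurable]: "a \<in> borel_measurable borel"
    unfolding a_def mh_accept_def by measurable
  have a01: "0 \<le> a y" "a y \<le> 1" for y
    unfolding a_def using accept_bounds[where tgt=tgt and q=q, OF tp qn] by auto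
  have K: "(\<lambda>y. measure_pmf (bernoulli_pmf (a y)) \<bind> (\<lambda>b. return borel (if b then y else x)))
     \<in> measurable (density lborel (\<lambda>y. ennreal (q x y))) (subprob_algebra borel)"
    using K_meas[OF am a01, of x] measurable_cong_sets[OF sets_density[of lborel "\<lambda>y. ennreal (q x y)"] refl, of "subprob_algebra borel"]
    by simp
  have h: "(\<lambda>y. ennreal ((f y - f x)\<^sup>2/2)) \<in> borel_measurable borel" by measurable
  have "(\<integral>\<^sup>+y. ennreal ((f y - f x)\<^sup>2/2) \<partial>mh_kernel tgt q x)
     = (\<integral>\<^sup>+y. (\<integral>\<^sup>+z. ennreal ((f z - f x)\<^sup>2/2) \<partial>(measure_pmf (bernoulli_pmf (a y)) \<bind> (\<lambda>b. return borel (if b then y else x)))) \<partial>density lborel (\<lambda>y. ennreal (q x y)))"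
    unfolding mh_kernel_def a_def[symmetric]
    by (rule nn_integral_bind[OF h K])
  also have "\<dots> = (\<integral>\<^sup>+y. ennreal ((f y - f x)\<^sup>2/2) * ennreal (a y) \<partial>density lborel (\<lambda>y. ennreal (q x y)))"
    apply (rule nn_integral_cong)
    apply (subst K_int[OF a01 h])
    by simp
  also have "\<dots> = (\<integral>\<^sup>+y. ennreal (q x y) * (ennreal ((f y - f x)\<^sup>2/2) * ennreal (a y)) \<partial>lborel)"
    by (rule nn_integral_density) auto
  also have "\<dots> = (\<integral>\<^sup>+y. ennreal (q x y * a y * ((f y - f x)\<^sup>2/2)) \<partial>lborel)"
    apply (rule nn_integral_cong)
    using qn a01 by (simp add: ennreal_mult[symmetric] mult_ac)
  finally show ?thesis unfolding a_def .
qed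


lemma pt_ineq:
  fixes a b c tx ty :: real
  assumes "0 \<le> a" "0 \<le> b" "0 \<le> c" "a \<le> 2*c" "b \<le> 2*c" "tx>0" "ty>0"
  shows "a * min 1 ((ty*b)/(tx*a)) \<le> 2*(c * min 1 ((ty*c)/(tx*c)))"
proof (cases "a = 0")
  case True then show ?thesis using assms by simp
next
  case False
  then have a: "a > 0" "c > 0" using assms by auto
  have l: "a * min 1 ((ty*b)/(tx*a)) = min a (ty*b/tx)"
    using a assms by (auto simp: min_def field_simps)
  have r: "2*(c * min 1 ((ty*c)/(tx*c))) = min (2*c) (2*c*ty/tx)"
    using a assms by (auto simp: min_def field_simps)
  have "ty*b/tx \<le> 2*c*ty/tx" using assms by (simp add: divide_right_mono)
  then show ?thesis unfolding l r using assms by linarith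
qed

lemma pcheck01: "0 \<le> pcheck g x z" "pcheck g x z \<le> 1"
  unfolding pcheck_def by (auto simp: divide_simps add_pos_pos)

theorem proposition3p3:
  fixes tgt mu :: "real^'d \<Rightarrow> real" and g :: "real^'d \<Rightarrow> real^'d"
  assumes pi_dens: "prob_density tgt"
    and pi_pos: "\<And>x. tgt x > 0"
    and grad: "\<And>x. ((\<lambda>u. ln (tgt u)) has_derivative (\<lambda>h. g x \<bullet> h)) (at x)"
    and grad_cont: "continuous_on UNIV g"
    and mu_dens: "prob_density mu"
    and mu_sym: "\<And>z. mu z = mu (- z)"
  shows "spectral_gap tgt (mh_kernel tgt (rw_proposal mu))
           \<ge> spectral_gap tgt (mh_kernel tgt (barker_proposal mu g)) / 2"
proof -
  have tm[measurable]: "tgt \<in> borel_measurable borel" using pi_dens by (simp add: prob_density_def)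
  have mm[measurable]: "mu \<in> borel_measurable borel" using mu_dens by (simp add: prob_density_def)
  have gm[measurable]: "g \<in> borel_measurable borel" by (rule borel_measurable_continuous_onI[OF grad_cont])
  have mun: "mu z \<ge> 0" for z using mu_dens by (simp add: prob_density_def)
  let ?R = "rw_proposal mu" and ?B = "barker_proposal mu g"
  have Rn: "?R x y \<ge> 0" for x y by (simp add: rw_proposal_def mun)
  have Bn: "?B x y \<ge> 0" for x y
    using pcheck01[of g x "y - x"] pcheck01[of g x "x - y"] mun[of "y - x"] mun[of "x - y"]
    by (simp add: barker_proposal_def)
  have Ble: "?B x y \<le> 2 * mu (y - x)" for x y
  proof -
    have s: "mu (x - y) = mu (y - x)" using mu_sym[of "y - x"] by simp
    show ?thesis
      using pcheck01[of g x "y - x"] pcheck01[of g x "x - y"] mun[of "y - x"] s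
        mult_left_le[of "pcheck g x (y - x)" "mu (y - x)"]
        mult_left_le[of "1 - pcheck g x (x - y)" "mu (y - x)"]
      by (simp add: barker_proposal_def)
  qed
  have key: "dirichlet_form tgt (mh_kernel tgt ?B) f \<le> 2 * dirichlet_form tgt (mh_kernel tgt ?R) f"
    if f: "f \<in> L2_01 tgt" for f
  proof -
    have fm[measurable]: "f \<in> borel_measurable borel" using f by (simp add: L2_01_def)
    have iR: "(\<integral>\<^sup>+y. ennreal ((f y - f x)\<^sup>2/2) \<partial>mh_kernel tgt ?R x)
       = (\<integral>\<^sup>+y. ennreal (?R x y * mh_accept tgt ?R x y * ((f y - f x)\<^sup>2/2)) \<partial>lborel)" for x
      by (rule kernel_int[OF tm pi_pos Rn]) (auto simp: rw_proposal_def)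
    have iB: "(\<integral>\<^sup>+y. ennreal ((f y - f x)\<^sup>2/2) \<partial>mh_kernel tgt ?B x)
       = (\<integral>\<^sup>+y. ennreal (?B x y * mh_accept tgt ?B x y * ((f y - f x)\<^sup>2/2)) \<partial>lborel)" for x
      by (rule kernel_int[OF tm pi_pos Bn]) (auto simp: barker_proposal_def pcheck_def)
    have pw: "?B x y * mh_accept tgt ?B x y \<le> 2 * (?R x y * mh_accept tgt ?R x y)" for x y
    proof -
      have s: "mu (x - y) = mu (y - x)" using mu_sym[of "y - x"] by simp
      show ?thesis
        unfolding mh_accept_def rw_proposal_def s
        by (rule pt_ineq[OF Bn Bn mun Ble]) (use Ble[of y x] s pi_pos in auto)
    qed
    have inner: "(\<integral>\<^sup>+y. ennreal ((f y - f x)\<^sup>2/2) \<partial>mh_kernel tgt ?B x)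
       \<le> 2 * (\<integral>\<^sup>+y. ennreal ((f y - f x)\<^sup>2/2) \<partial>mh_kernel tgt ?R x)" for x
    proof -
      have "(\<integral>\<^sup>+y. ennreal (?B x y * mh_accept tgt ?B x y * ((f y - f x)\<^sup>2/2)) \<partial>lborel)
          \<le> (\<integral>\<^sup>+y. 2 * ennreal (?R x y * mh_accept tgt ?R x y * ((f y - f x)\<^sup>2/2)) \<partial>lborel)"
      proof (rule nn_integral_mono)
        fix y
        have "?B x y * mh_accept tgt ?B x y * ((f y - f x)\<^sup>2/2) \<le> 2 * (?R x y * mh_accept tgt ?R x y) * ((f y - f x)\<^sup>2/2)"
          by (rule mult_right_mono[OF pw]) simp
        then have "ennreal (?B x y * mh_accept tgt ?B x y * ((f y - f x)\<^sup>2/2))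
           \<le> ennreal (2 * (?R x y * mh_accept tgt ?R x y * ((f y - f x)\<^sup>2/2)))"
          by (intro ennreal_leI) (simp add: mult_ac)
        also have "\<dots> = 2 * ennreal (?R x y * mh_accept tgt ?R x y * ((f y - f x)\<^sup>2/2))"
        proof -
          have "0 \<le> ?R x y * mh_accept tgt ?R x y * ((f y - f x)\<^sup>2/2)"
            using Rn[of x y] accept_bounds(1)[where tgt=tgt and q="?R", OF pi_pos Rn, of x y] by simp
          then show ?thesis using ennreal_mult[of 2 "?R x y * mh_accept tgt ?R x y * ((f y - f x)\<^sup>2/2)"] by simp
        qed
        finally show "ennreal (?B x y * mh_accept tgt ?B x y * ((f y - f x)\<^sup>2/2))
           \<le> 2 * ennreal (?R x y * mh_accept tgt ?R x y * ((f y - f x)\<^sup>2/2))" .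
      qed
      also have "\<dots> = 2 * (\<integral>\<^sup>+y. ennreal (?R x y * mh_accept tgt ?R x y * ((f y - f x)\<^sup>2/2)) \<partial>lborel)"
        by (rule nn_integral_cmult) (simp add: rw_proposal_def mh_accept_def)
      finally show ?thesis unfolding iR iB .
    qed
    have meas: "(\<lambda>x. \<integral>\<^sup>+y. ennreal ((f y - f x)\<^sup>2/2) \<partial>mh_kernel tgt ?R x) \<in> borel_measurable (density lborel tgt)"
      unfolding iR by (simp add: rw_proposal_def mh_accept_def)
    have "dirichlet_form tgt (mh_kernel tgt ?B) f \<le> (\<integral>\<^sup>+x. 2 * (\<integral>\<^sup>+y. ennreal ((f y - f x)\<^sup>2/2) \<partial>mh_kernel tgt ?R x) \<partial>density lborel tgt)"
      unfolding dirichlet_form_def by (rule nn_integral_mono) (rule inner)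
    also have "\<dots> = 2 * dirichlet_form tgt (mh_kernel tgt ?R) f"
      unfolding dirichlet_form_def by (rule nn_integral_cmult[OF meas])
    finally show ?thesis .
  qed
  show ?thesis
    unfolding spectral_gap_def
  proof (rule INF_greatest)
    fix f assume f: "f \<in> L2_01 tgt"
    have "(INF f \<in> L2_01 tgt. dirichlet_form tgt (mh_kernel tgt ?B) f) \<le> 2 * dirichlet_form tgt (mh_kernel tgt ?R) f"
      using INF_lower[OF f, of "dirichlet_form tgt (mh_kernel tgt ?B)"] key[OF f] by (rule order_trans)
    then show "(INF f \<in> L2_01 tgt. dirichlet_form tgt (mh_kernel tgt ?B) f) / 2 \<le> dirichlet_form tgt (mh_kernel tgt ?R) f"
      by (intro divide_le_posI_ennreal) auto
  qed
qed

end
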